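(* Assume regular conditional distributions $P_{Y|X}$ and $P_{X|Y}$ exist. Let $h>0$ be a density w.r.t. $P_X$ of some probability measure $Q^\ast_X$ on $(\Omega_X,\mathcal H)$, and let $g_0>0$ be a density w.r.t. $P_Y$ of a probability measure on $(\Omega_Y,\mathcal G)$. Define recursively for $n=0,1,\dots$ $$q^{(n)}_{Y|X=x}(y)=\frac{g_n(y)}{\int g_n(z)\,P_{Y|X=x}(dz)},\qquad g_{n+1}(y)=\int q^{(n)}_{Y|X=x}(y)\,h(x)\,P_{X|Y=y}(dx),$$ for $x\in\Omega_X$, $y\in\Omega_Y$. Then: (i) all $q^{(n)}_{Y|X=x}$ ($x\in\Omega_X$, $n\ge0$) are positive and probability densities with respect to $P_{Y|X=x}$, and all $g_n$ ($n\ge1$) are positive and probability densities with respect to $P_Y$. (ii) Let $Q^{(n)}$ be the probability measure on $(\Omega,\mathcal F)$ with $\frac{dQ^{(n)}}{dP}=g_n(Y)$ and $h_n=\frac{dQ^{(n)}_X}{dP_X}=E_P[g_n(Y)\mid X=\cdot]$. Assume that all integrals involved exist and are finite, in particular $E_P[h(X)\,|\log h(X)|]<\infty$ and $E_P[h(X)\,|\log h_n(X)|]<\infty$ for all $n$. Then $$\mathrm{KL}_{P_X}(h\,\|\,h_{n+1})\le\mathrm{KL}_{P_X}(h\,\|\,h_n)\quad\text{for all } n=0,1,\dots$$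
   Context: Setting: $(\Omega_X,\mathcal H)$ and $(\Omega_Y,\mathcal G)$ are measurable spaces, $\Omega=\Omega_X\times\Omega_Y$, $\mathcal F=\mathcal H\otimes\mathcal G$, and $X,Y$ are the coordinate projections. $P$ is a probability measure on $(\Omega,\mathcal F)$ with marginals $P_X,P_Y$. A regular conditional distribution of $Y$ given $X$ under $P$ is a map $(x,G)\mapsto P_{Y|X=x}[G]$ on $\Omega_X\times\mathcal G$ that is $\mathcal H$-measurable in $x$ for each $G$, a probability measure in $G$ for each $x$, and satisfies $P[Y\in G\mid X=x]=P_{Y|X=x}[G]$ for $P_X$-a.e. $x$, for every $G\in\mathcal G$; $P_{X|Y}$ is defined analogously. Kullback–Leibler divergence: for a probability space $(\overline\Omega,\mathcal M,\mu)$ and measurable $\lambda_0,\lambda_1\ge0$ with $\int\lambda_i\,d\mu=1$, $\mu[\lambda_i=0]=0$ ($i=0,1$) and $\int\lambda_0|\log(\lambda_0/\lambda_1)|\,d\mu<\infty$, $\mathrm{KL}_\mu(\lambda_0\|\lambda_1)=\int\lambda_0\log(\lambda_0/\lambda_1)\,d\mu$. *)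

theory Defs
  imports "HOL-Probability.Probability"
begin

definition marg_X :: "('a \<times> 'b) measure \<Rightarrow> 'a measure \<Rightarrow> 'a measure" where
  "marg_X P MX = distr P MX fst"

definition marg_Y :: "('a \<times> 'b) measure \<Rightarrow> 'b measure \<Rightarrow> 'b measure" where
  "marg_Y P MY = distr P MY snd"

definition reg_cond_dist_YX ::
  "('a \<times> 'b) measure \<Rightarrow> 'a measure \<Rightarrow> 'b measure \<Rightarrow> ('a \<Rightarrow> 'b measure) \<Rightarrow> bool" where
  "reg_cond_dist_YX P MX MY K \<longleftrightarrow>
     (\<forall>x\<in>space MX. prob_space (K x) \<and> sets (K x) = sets MY) \<and>
     (\<forall>G\<in>sets MY. (\<lambda>x. measure (K x) G) \<in> borel_measurable MX) \<and>
     (\<forall>G\<in>sets MY. \<forall>H\<in>sets MX.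
        measure P (H \<times> G) = (\<integral>x. indicator H x * measure (K x) G \<partial>marg_X P MX))"

definition reg_cond_dist_XY ::
  "('a \<times> 'b) measure \<Rightarrow> 'a measure \<Rightarrow> 'b measure \<Rightarrow> ('b \<Rightarrow> 'a measure) \<Rightarrow> bool" where
  "reg_cond_dist_XY P MX MY L \<longleftrightarrow>
     (\<forall>y\<in>space MY. prob_space (L y) \<and> sets (L y) = sets MX) \<and>
     (\<forall>H\<in>sets MX. (\<lambda>y. measure (L y) H) \<in> borel_measurable MY) \<and>
     (\<forall>H\<in>sets MX. \<forall>G\<in>sets MY.
        measure P (H \<times> G) = (\<integral>y. indicator G y * measure (L y) H \<partial>marg_Y P MY))"

primrec itg :: "('a \<Rightarrow> 'b measure) \<Rightarrow> ('b \<Rightarrow> 'a measure) \<Rightarrow> ('a \<Rightarrow> real) \<Rightarrow> ('b \<Rightarrow> real)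
                 \<Rightarrow> nat \<Rightarrow> 'b \<Rightarrow> real" where
  "itg K L h g0 0 = g0"
| "itg K L h g0 (Suc n) =
     (\<lambda>y. \<integral>x. (itg K L h g0 n y / (\<integral>z. itg K L h g0 n z \<partial>K x)) * h x \<partial>L y)"

definition itq :: "('a \<Rightarrow> 'b measure) \<Rightarrow> ('b \<Rightarrow> 'a measure) \<Rightarrow> ('a \<Rightarrow> real) \<Rightarrow> ('b \<Rightarrow> real)
                 \<Rightarrow> nat \<Rightarrow> 'a \<Rightarrow> 'b \<Rightarrow> real" where
  "itq K L h g0 n x y = itg K L h g0 n y / (\<integral>z. itg K L h g0 n z \<partial>K x)"

definition itQ :: "('a \<times> 'b) measure \<Rightarrow> ('b \<Rightarrow> real) \<Rightarrow> ('a \<times> 'b) measure" where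
  "itQ P g = density P (\<lambda>p. ennreal (g (snd p)))"

definition ith :: "('a \<times> 'b) measure \<Rightarrow> 'a measure \<Rightarrow> ('b \<Rightarrow> real) \<Rightarrow> 'a \<Rightarrow> real" where
  "ith P MX g = (\<lambda>x. enn2real (RN_deriv (marg_X P MX) (distr (itQ P g) MX fst) x))"

definition KL_dens :: "'c measure \<Rightarrow> ('c \<Rightarrow> real) \<Rightarrow> ('c \<Rightarrow> real) \<Rightarrow> real" where
  "KL_dens \<mu> l0 l1 = (\<integral>x. l0 x * ln (l0 x / l1 x) \<partial>\<mu>)"

end

theory Submission
  imports Defs
begin


lemma disint_eq:
  fixes P :: "('a \<times> 'b) measure" and MX :: "'a measure" and MY :: "'b measure"
  assumes P: "prob_space P" "sets P = sets (MX \<Otimes>\<^sub>M MY)"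
    and K1: "\<forall>x\<in>space MX. prob_space (K x) \<and> sets (K x) = sets MY"
    and K2: "\<forall>G\<in>sets MY. (\<lambda>x. measure (K x) G) \<in> borel_measurable MX"
    and K3: "\<forall>G\<in>sets MY. \<forall>H\<in>sets MX.
        measure P (H \<times> G) = (\<integral>x. indicator H x * measure (K x) G \<partial>distr P MX fst)"
  shows "K \<in> measurable MX (subprob_algebra MY)"
    and "P = distr P MX fst \<bind> (\<lambda>x. distr (K x) (MX \<Otimes>\<^sub>M MY) (Pair x))"
proof -
  interpret P: prob_space P by fact
  have fstm: "fst \<in> measurable P MX"
    using P(2) by (simp add: measurable_cong_sets[OF P(2) refl])
  interpret PX: prob_space "distr P MX fst" by (rule P.prob_space_distr[OF fstm])
  show Km: "K \<in> measurable MX (subprob_algebra MY)"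
  proof (rule measurable_subprob_algebra)
    fix a assume "a \<in> space MX" then show "subprob_space (K a)" "sets (K a) = sets MY"
      using K1 by (auto simp: prob_space_imp_subprob_space)
  next
    fix A assume A: "A \<in> sets MY"
    have "(\<lambda>a. ennreal (measure (K a) A)) \<in> borel_measurable MX" using K2 A by auto
    then show "(\<lambda>a. emeasure (K a) A) \<in> borel_measurable MX"
      by (rule measurable_cong[THEN iffD1, rotated])
         (use K1 in \<open>auto simp: finite_measure.emeasure_eq_measure[OF prob_space.finite_measure]\<close>)
  qed
  have Nm: "(\<lambda>x. distr (K x) (MX \<Otimes>\<^sub>M MY) (Pair x)) \<in> measurable MX (subprob_algebra (MX \<Otimes>\<^sub>M MY))"
    by (rule measurable_distr2[OF _ Km]) simp
  have spX: "space (distr P MX fst) = space MX" by simp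
  have ne: "space MX \<noteq> {}"
  proof
    assume "space MX = {}"
    then have "space P = {}" using P(2) sets_eq_imp_space_eq[OF P(2)] by (simp add: space_pair_measure)
    then show False using P.not_empty by simp
  qed
  have Nm': "(\<lambda>x. distr (K x) (MX \<Otimes>\<^sub>M MY) (Pair x)) \<in> measurable (distr P MX fst) (subprob_algebra (MX \<Otimes>\<^sub>M MY))"
  proof -
    have "measurable (distr P MX fst) (subprob_algebra (MX \<Otimes>\<^sub>M MY)) = measurable MX (subprob_algebra (MX \<Otimes>\<^sub>M MY))"
      by (rule measurable_cong_sets) auto
    then show ?thesis using Nm by simp
  qed
  show "P = distr P MX fst \<bind> (\<lambda>x. distr (K x) (MX \<Otimes>\<^sub>M MY) (Pair x))"
  proof (rule measure_eqI_generator_eq[OF Int_stable_pair_measure_generator[of MX MY]])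
    show "{a \<times> b |a b. a \<in> sets MX \<and> b \<in> sets MY} \<subseteq> Pow (space MX \<times> space MY)"
      by (auto dest!: sets.sets_into_space)
    show "sets P = sigma_sets (space MX \<times> space MY) {a \<times> b |a b. a \<in> sets MX \<and> b \<in> sets MY}"
      using P(2) by (simp only: sets_pair_measure)
    show "sets (distr P MX fst \<bind> (\<lambda>x. distr (K x) (MX \<Otimes>\<^sub>M MY) (Pair x))) = sigma_sets (space MX \<times> space MY) {a \<times> b |a b. a \<in> sets MX \<and> b \<in> sets MY}"
    proof -
      have "sets (distr P MX fst \<bind> (\<lambda>x. distr (K x) (MX \<Otimes>\<^sub>M MY) (Pair x))) = sets (MX \<Otimes>\<^sub>M MY)"
        by (rule sets_bind) (use ne in simp_all)
      then show ?thesis by (simp only: sets_pair_measure)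
    qed
    show "range (\<lambda>i. space MX \<times> space MY) \<subseteq> {a \<times> b |a b. a \<in> sets MX \<and> b \<in> sets MY}" by auto
    show "(\<Union>i. space MX \<times> space MY) = space MX \<times> space MY" by simp
    show "emeasure P (space MX \<times> space MY) \<noteq> \<infinity>" for i::nat by simp
  next
    fix X assume "X \<in> {a \<times> b |a b. a \<in> sets MX \<and> b \<in> sets MY}"
    then obtain H G where X: "X = H \<times> G" and H: "H \<in> sets MX" and G: "G \<in> sets MY" by auto
    have XS: "X \<in> sets (MX \<Otimes>\<^sub>M MY)" using X H G by simp
    have "emeasure (distr P MX fst \<bind> (\<lambda>x. distr (K x) (MX \<Otimes>\<^sub>M MY) (Pair x))) X
        = (\<integral>\<^sup>+x. emeasure (distr (K x) (MX \<Otimes>\<^sub>M MY) (Pair x)) X \<partial>distr P MX fst)"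
      using ne XS by (subst emeasure_bind[OF _ Nm']) auto
    also have "\<dots> = (\<integral>\<^sup>+x. ennreal (indicator H x * measure (K x) G) \<partial>distr P MX fst)"
    proof (rule nn_integral_cong)
      fix x assume x: "x \<in> space (distr P MX fst)"
      then have x': "x \<in> space MX" by simp
      interpret Kx: prob_space "K x" using K1 x' by auto
      have sK: "space (K x) = space MY" using K1 x' sets_eq_imp_space_eq by blast
      have "emeasure (distr (K x) (MX \<Otimes>\<^sub>M MY) (Pair x)) X = emeasure (K x) (Pair x -` X \<inter> space (K x))"
      proof (rule emeasure_distr[OF _ XS])
        have "measurable (K x) (MX \<Otimes>\<^sub>M MY) = measurable MY (MX \<Otimes>\<^sub>M MY)"
          by (rule measurable_cong_sets) (use K1 x' in auto)
        then show "Pair x \<in> measurable (K x) (MX \<Otimes>\<^sub>M MY)" using x' by simp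
      qed
      also have "Pair x -` X \<inter> space (K x) = (if x \<in> H then G else {})"
        using X sK sets.sets_into_space[OF G] by auto
      finally show "emeasure (distr (K x) (MX \<Otimes>\<^sub>M MY) (Pair x)) X = ennreal (indicator H x * measure (K x) G)"
        by (simp add: Kx.emeasure_eq_measure)
    qed
    also have "\<dots> = ennreal (\<integral>x. indicator H x * measure (K x) G \<partial>distr P MX fst)"
    proof (rule nn_integral_eq_integral)
      show "integrable (distr P MX fst) (\<lambda>x. indicator H x * measure (K x) G)"
      proof (rule PX.integrable_const_bound[where B=1])
        have m: "(\<lambda>x. indicator H x * measure (K x) G) \<in> borel_measurable MX"
          using H G K2 by (intro borel_measurable_times borel_measurable_indicator) auto
        have "measurable (distr P MX fst) borel = measurable MX borel"
          by (rule measurable_cong_sets) auto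
        then show "(\<lambda>x. indicator H x * measure (K x) G) \<in> borel_measurable (distr P MX fst)"
          using m by simp
        show "AE x in distr P MX fst. norm (indicator H x * measure (K x) G) \<le> (1::real)"
        proof (rule AE_I2)
          fix x assume "x \<in> space (distr P MX fst)"
          then have "prob_space (K x)" using K1 by simp
          then have "measure (K x) G \<le> 1" by (rule prob_space.prob_le_1)
          then show "norm (indicator H x * measure (K x) G) \<le> (1::real)"
            by (simp add: indicator_def)
        qed
      qed
    qed auto
    also have "\<dots> = emeasure P X"
      using K3 H G X by (simp add: P.emeasure_eq_measure)
    finally show "emeasure P X = emeasure (distr P MX fst \<bind> (\<lambda>x. distr (K x) (MX \<Otimes>\<^sub>M MY) (Pair x))) X" by simp
  qed
qed

lemma disint_nn:
  fixes P :: "('a \<times> 'b) measure" and MX :: "'a measure" and MY :: "'b measure"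
  assumes P: "prob_space P" "sets P = sets (MX \<Otimes>\<^sub>M MY)"
    and K: "reg_cond_dist_YX P MX MY K"
    and f: "f \<in> borel_measurable (MX \<Otimes>\<^sub>M MY)"
  shows "(\<integral>\<^sup>+z. f z \<partial>P) = (\<integral>\<^sup>+x. \<integral>\<^sup>+y. f (x,y) \<partial>K x \<partial>marg_X P MX)"
proof -
  note KK = K[unfolded reg_cond_dist_YX_def marg_X_def]
  have K1: "\<forall>x\<in>space MX. prob_space (K x) \<and> sets (K x) = sets MY" using KK by blast
  have Km: "K \<in> measurable MX (subprob_algebra MY)"
    and eq: "P = distr P MX fst \<bind> (\<lambda>x. distr (K x) (MX \<Otimes>\<^sub>M MY) (Pair x))"
    using disint_eq[OF P] KK by blast+
  have Nm: "(\<lambda>x. distr (K x) (MX \<Otimes>\<^sub>M MY) (Pair x)) \<in> measurable MX (subprob_algebra (MX \<Otimes>\<^sub>M MY))"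
    by (rule measurable_distr2[OF _ Km]) simp
  have Nm': "(\<lambda>x. distr (K x) (MX \<Otimes>\<^sub>M MY) (Pair x)) \<in> measurable (distr P MX fst) (subprob_algebra (MX \<Otimes>\<^sub>M MY))"
  proof -
    have "measurable (distr P MX fst) (subprob_algebra (MX \<Otimes>\<^sub>M MY)) = measurable MX (subprob_algebra (MX \<Otimes>\<^sub>M MY))"
      by (rule measurable_cong_sets) auto
    then show ?thesis using Nm by simp
  qed
  have "(\<integral>\<^sup>+z. f z \<partial>P) = (\<integral>\<^sup>+z. f z \<partial>(distr P MX fst \<bind> (\<lambda>x. distr (K x) (MX \<Otimes>\<^sub>M MY) (Pair x))))"
    using arg_cong[OF eq, of "\<lambda>M. \<integral>\<^sup>+z. f z \<partial>M"] .
  also have "\<dots> = (\<integral>\<^sup>+x. \<integral>\<^sup>+z. f z \<partial>distr (K x) (MX \<Otimes>\<^sub>M MY) (Pair x) \<partial>distr P MX fst)"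
    by (rule nn_integral_bind[OF f Nm'])
  also have "\<dots> = (\<integral>\<^sup>+x. \<integral>\<^sup>+y. f (x,y) \<partial>K x \<partial>distr P MX fst)"
  proof (rule nn_integral_cong)
    fix x assume "x \<in> space (distr P MX fst)"
    then have x': "x \<in> space MX" by simp
    have "measurable (K x) (MX \<Otimes>\<^sub>M MY) = measurable MY (MX \<Otimes>\<^sub>M MY)"
      by (rule measurable_cong_sets) (use K1 x' in auto)
    then have pm: "Pair x \<in> measurable (K x) (MX \<Otimes>\<^sub>M MY)" using x' by simp
    show "(\<integral>\<^sup>+z. f z \<partial>distr (K x) (MX \<Otimes>\<^sub>M MY) (Pair x)) = (\<integral>\<^sup>+y. f (x,y) \<partial>K x)"
      by (rule nn_integral_distr[OF pm]) (use f in simp)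
  qed
  finally show ?thesis unfolding marg_X_def .
qed

lemma swap_meas: "prod.swap \<in> measurable (A \<Otimes>\<^sub>M B) (B \<Otimes>\<^sub>M A)"
proof -
  have "prod.swap = (\<lambda>(x::'a,y::'b). (y, x))" by (auto simp: fun_eq_iff)
  then show ?thesis using measurable_pair_swap'[of A B] by simp
qed

lemma disint_nn_Y:
  fixes P :: "('a \<times> 'b) measure" and MX :: "'a measure" and MY :: "'b measure"
  assumes P: "prob_space P" "sets P = sets (MX \<Otimes>\<^sub>M MY)"
    and L: "reg_cond_dist_XY P MX MY L"
    and f: "f \<in> borel_measurable (MX \<Otimes>\<^sub>M MY)"
  shows "(\<integral>\<^sup>+z. f z \<partial>P) = (\<integral>\<^sup>+y. \<integral>\<^sup>+x. f (x,y) \<partial>L y \<partial>marg_Y P MY)"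
proof -
  interpret P: prob_space P by fact
  let ?P = "distr P (MY \<Otimes>\<^sub>M MX) prod.swap"
  have sw: "prod.swap \<in> measurable P (MY \<Otimes>\<^sub>M MX)"
  proof -
    have "measurable P (MY \<Otimes>\<^sub>M MX) = measurable (MX \<Otimes>\<^sub>M MY) (MY \<Otimes>\<^sub>M MX)"
      by (rule measurable_cong_sets) (use P in auto)
    moreover have "prod.swap \<in> measurable (MX \<Otimes>\<^sub>M MY) (MY \<Otimes>\<^sub>M MX)"
    proof -
      have "prod.swap = (\<lambda>(x::'a,y::'b). (y, x))" by (auto simp: fun_eq_iff)
      then show ?thesis using measurable_pair_swap'[of MX MY] by simp
    qed
    ultimately show ?thesis by simp
  qed
  have P': "prob_space ?P" "sets ?P = sets (MY \<Otimes>\<^sub>M MX)"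
    using P.prob_space_distr[OF sw] by auto
  have sndm: "snd \<in> measurable P MY"
  proof -
    have "measurable P MY = measurable (MX \<Otimes>\<^sub>M MY) MY"
      by (rule measurable_cong_sets) (use P in auto)
    then show ?thesis by simp
  qed
  have margs: "marg_X ?P MY = marg_Y P MY"
    unfolding marg_X_def marg_Y_def
    by (subst distr_distr[OF _ sw]) (auto simp: comp_def intro!: distr_cong)
  have spP: "space P = space MX \<times> space MY"
    using sets_eq_imp_space_eq[OF P(2)] by (simp add: space_pair_measure)
  have K': "reg_cond_dist_YX ?P MY MX L"
    unfolding reg_cond_dist_YX_def
  proof (intro conjI ballI)
    fix G H assume G: "G \<in> sets MX" and H: "H \<in> sets MY"
    have "measure ?P (H \<times> G) = measure P (prod.swap -` (H \<times> G) \<inter> space P)"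
      using G H by (subst measure_distr[OF sw]) auto
    also have "prod.swap -` (H \<times> G) \<inter> space P = G \<times> H"
      using spP sets.sets_into_space[OF G] sets.sets_into_space[OF H] by auto
    finally show "measure ?P (H \<times> G) = (\<integral>x. indicator H x * measure (L x) G \<partial>marg_X ?P MY)"
      using L G H unfolding margs reg_cond_dist_XY_def by auto
  qed (use L in \<open>auto simp: reg_cond_dist_XY_def\<close>)
  have fs: "(\<lambda>z. f (prod.swap z)) \<in> borel_measurable (MY \<Otimes>\<^sub>M MX)"
    using measurable_compose[OF swap_meas f] .
  have "(\<integral>\<^sup>+z. f z \<partial>P) = (\<integral>\<^sup>+z. f (prod.swap z) \<partial>?P)"
  proof -
    have "(\<integral>\<^sup>+z. f (prod.swap z) \<partial>?P) = (\<integral>\<^sup>+z. f (prod.swap (prod.swap z)) \<partial>P)"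
      by (rule nn_integral_distr[OF sw]) (use fs in simp)
    then show ?thesis by simp
  qed
  also have "\<dots> = (\<integral>\<^sup>+y. \<integral>\<^sup>+x. f (prod.swap (y,x)) \<partial>L y \<partial>marg_X ?P MY)"
    by (rule disint_nn[OF P' K' fs])
  finally show ?thesis unfolding margs by simp
qed



lemma kernel_meas:
  assumes "\<forall>x\<in>space A. prob_space (K x) \<and> sets (K x) = sets B"
    and "\<forall>G\<in>sets B. (\<lambda>x. measure (K x) G) \<in> borel_measurable A"
  shows "K \<in> measurable A (subprob_algebra B)"
proof (rule measurable_subprob_algebra)
  fix a assume "a \<in> space A" then show "subprob_space (K a)" "sets (K a) = sets B"
    using assms by (auto simp: prob_space_imp_subprob_space)
next
  fix G assume G: "G \<in> sets B"
  have "(\<lambda>a. ennreal (measure (K a) G)) \<in> borel_measurable A" using assms G by auto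
  then show "(\<lambda>a. emeasure (K a) G) \<in> borel_measurable A"
    by (rule measurable_cong[THEN iffD1, rotated])
       (use assms in \<open>auto simp: finite_measure.emeasure_eq_measure[OF prob_space.finite_measure]\<close>)
qed

lemma integral_pos_prob:
  fixes f :: "'a \<Rightarrow> real"
  assumes M: "prob_space M" and f: "integrable M f" and pos: "\<And>x. x \<in> space M \<Longrightarrow> 0 < f x"
  shows "0 < integral\<^sup>L M f"
proof -
  interpret prob_space M by fact
  have nn: "AE x in M. 0 \<le> f x" using pos by (auto intro!: AE_I2 less_imp_le)
  have "0 \<le> integral\<^sup>L M f" by (rule integral_nonneg_AE[OF nn])
  moreover have "integral\<^sup>L M f \<noteq> 0"
  proof
    assume "integral\<^sup>L M f = 0"
    then have "AE x in M. f x = 0" using integral_nonneg_eq_0_iff_AE[OF f nn] by simp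
    then have "AE x in M. False" using AE_space by eventually_elim (use pos in force)
    then show False using AE_False by simp
  qed
  ultimately show ?thesis by simp
qed

lemma key_ineq:
  fixes a r w :: real
  assumes "0 < a" "0 < r" "0 \<le> w"
  shows "2 * w - w / r - w * r / a \<le> w * ln a"
proof -
  have "ln (r / a) \<le> r / a - 1" using assms by (intro ln_le_minus_one) auto
  moreover have "ln (1 / r) \<le> 1 / r - 1" using assms by (intro ln_le_minus_one) auto
  ultimately have "2 - 1 / r - r / a \<le> ln a"
    using assms by (simp add: ln_div)
  then have "w * (2 - 1 / r - r / a) \<le> w * ln a" using assms by (intro mult_left_mono) auto
  then show ?thesis by (simp add: algebra_simps)
qed

theorem theorem3:
  fixes P :: "('a \<times> 'b) measure" and MX :: "'a measure" and MY :: "'b measure"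
    and K :: "'a \<Rightarrow> 'b measure" and L :: "'b \<Rightarrow> 'a measure"
    and h :: "'a \<Rightarrow> real" and g0 :: "'b \<Rightarrow> real"
  assumes P: "prob_space P" "sets P = sets (MX \<Otimes>\<^sub>M MY)"
    and K: "reg_cond_dist_YX P MX MY K"
    and L: "reg_cond_dist_XY P MX MY L"
    and h: "h \<in> borel_measurable MX" "\<forall>x\<in>space MX. h x > 0"
           "integrable (marg_X P MX) h" "(\<integral>x. h x \<partial>marg_X P MX) = 1"
    and g0: "g0 \<in> borel_measurable MY" "\<forall>y\<in>space MY. g0 y > 0"
           "integrable (marg_Y P MY) g0" "(\<integral>y. g0 y \<partial>marg_Y P MY) = 1"
    and fin_q: "\<forall>n. \<forall>x\<in>space MX. integrable (K x) (itg K L h g0 n)"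
    and fin_g: "\<forall>n. \<forall>y\<in>space MY. integrable (L y) (\<lambda>x. itq K L h g0 n x y * h x)"
  shows "(\<forall>n. \<forall>x\<in>space MX.
            (\<forall>y\<in>space MY. itq K L h g0 n x y > 0) \<and>
            itq K L h g0 n x \<in> borel_measurable MY \<and>
            integrable (K x) (itq K L h g0 n x) \<and>
            (\<integral>y. itq K L h g0 n x y \<partial>K x) = 1) \<and>
         (\<forall>n\<ge>1.
            (\<forall>y\<in>space MY. itg K L h g0 n y > 0) \<and>
            itg K L h g0 n \<in> borel_measurable MY \<and>
            integrable (marg_Y P MY) (itg K L h g0 n) \<and>
            (\<integral>y. itg K L h g0 n y \<partial>marg_Y P MY) = 1) \<and>
         ((integrable (marg_X P MX) (\<lambda>x. h x * \<bar>ln (h x)\<bar>) \<and>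
           (\<forall>n. integrable (marg_X P MX) (\<lambda>x. h x * \<bar>ln (ith P MX (itg K L h g0 n) x)\<bar>)))
          \<longrightarrow> (\<forall>n. KL_dens (marg_X P MX) h (ith P MX (itg K L h g0 (Suc n)))
                    \<le> KL_dens (marg_X P MX) h (ith P MX (itg K L h g0 n))))"
proof -
  interpret P: prob_space P by fact
  define PX where "PX = marg_X P MX"
  define PY where "PY = marg_Y P MY"
  have fstm: "fst \<in> measurable P MX"
  proof -
    have "measurable P MX = measurable (MX \<Otimes>\<^sub>M MY) MX"
      by (rule measurable_cong_sets) (use P in auto)
    then show ?thesis by simp
  qed
  have sndm: "snd \<in> measurable P MY"
  proof -
    have "measurable P MY = measurable (MX \<Otimes>\<^sub>M MY) MY"
      by (rule measurable_cong_sets) (use P in auto)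
    then show ?thesis by simp
  qed
  interpret PX: prob_space PX unfolding PX_def marg_X_def by (rule P.prob_space_distr[OF fstm])
  interpret PY: prob_space PY unfolding PY_def marg_Y_def by (rule P.prob_space_distr[OF sndm])
  have spX[simp]: "space PX = space MX" and spY[simp]: "space PY = space MY"
    and setsX[simp]: "sets PX = sets MX" and setsY[simp]: "sets PY = sets MY"
    unfolding PX_def PY_def marg_X_def marg_Y_def by auto
  have mPX[simp]: "measurable PX N = measurable MX N" for N :: "'z measure"
    by (rule measurable_cong_sets) auto
  have mPY[simp]: "measurable PY N = measurable MY N" for N :: "'z measure"
    by (rule measurable_cong_sets) auto
  have K1: "\<forall>x\<in>space MX. prob_space (K x) \<and> sets (K x) = sets MY"
    and K2: "\<forall>G\<in>sets MY. (\<lambda>x. measure (K x) G) \<in> borel_measurable MX"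
    using K unfolding reg_cond_dist_YX_def by blast+
  have L1: "\<forall>y\<in>space MY. prob_space (L y) \<and> sets (L y) = sets MX"
    and L2: "\<forall>H\<in>sets MX. (\<lambda>y. measure (L y) H) \<in> borel_measurable MY"
    using L unfolding reg_cond_dist_XY_def by blast+
  have Km: "K \<in> measurable MX (subprob_algebra MY)" by (rule kernel_meas[OF K1 K2])
  have Lm: "L \<in> measurable MY (subprob_algebra MX)" by (rule kernel_meas[OF L1 L2])
  have mK[simp]: "x \<in> space MX \<Longrightarrow> measurable (K x) N = measurable MY N" for x and N :: "'z measure"
    by (rule measurable_cong_sets) (use K1 in auto)
  have mL[simp]: "y \<in> space MY \<Longrightarrow> measurable (L y) N = measurable MX N" for y and N :: "'z measure"
    by (rule measurable_cong_sets) (use L1 in auto)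
  have spK[simp]: "x \<in> space MX \<Longrightarrow> space (K x) = space MY" for x
    using K1 sets_eq_imp_space_eq by blast
  have spL[simp]: "y \<in> space MY \<Longrightarrow> space (L y) = space MX" for y
    using L1 sets_eq_imp_space_eq by blast

  define g where "g = itg K L h g0"
  define c where "c n x = (\<integral>z. g n z \<partial>K x)" for n x
  define r where "r n y = (\<integral>x. h x / c n x \<partial>L y)" for n y
  have q_eq: "itq K L h g0 n x y = g n y / c n x" for n x y
    unfolding itq_def g_def c_def by simp
  have gsuc: "g (Suc n) y = g n y * r n y" for n y
  proof -
    have "g (Suc n) y = (\<integral>x. g n y * (h x / c n x) \<partial>L y)"
      unfolding g_def c_def by simp
    also have "\<dots> = g n y * r n y" unfolding r_def by (rule integral_mult_right_zero)
    finally show ?thesis .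
  qed
  have fq: "x \<in> space MX \<Longrightarrow> integrable (K x) (g n)" for n x
    using fin_q unfolding g_def by blast
  have cfacts: "c n \<in> borel_measurable MX \<and> (\<forall>x\<in>space MX. c n x > 0)"
    if gm: "g n \<in> borel_measurable MY" and gp: "\<forall>y\<in>space MY. g n y > 0" for n
  proof
    show "c n \<in> borel_measurable MX"
      unfolding c_def using measurable_compose[OF Km integral_measurable_subprob_algebra[OF gm]] .
    show "\<forall>x\<in>space MX. c n x > 0"
      unfolding c_def using K1 fq gp by (auto intro!: integral_pos_prob)
  qed
  have rfacts: "r n \<in> borel_measurable MY \<and> (\<forall>y\<in>space MY. r n y > 0 \<and> integrable (L y) (\<lambda>x. h x / c n x))"
    if gm: "g n \<in> borel_measurable MY" and gp: "\<forall>y\<in>space MY. g n y > 0" for n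
  proof -
    have cm: "c n \<in> borel_measurable MX" and cp: "\<forall>x\<in>space MX. c n x > 0"
      using cfacts[OF gm gp] by auto
    have hcm: "(\<lambda>x. h x / c n x) \<in> borel_measurable MX" using h(1) cm by measurable
    have rm: "r n \<in> borel_measurable MY"
      unfolding r_def using measurable_compose[OF Lm integral_measurable_subprob_algebra[OF hcm]] .
    have int: "integrable (L y) (\<lambda>x. h x / c n x)" if y: "y \<in> space MY" for y
    proof -
      have "integrable (L y) (\<lambda>x. itq K L h g0 n x y * h x)" using fin_g y by blast
      then have "integrable (L y) (\<lambda>x. (1 / g n y) * (itq K L h g0 n x y * h x))"
        by (rule integrable_mult_right)
      moreover have "(1 / g n y) * (itq K L h g0 n x y * h x) = h x / c n x" for x
      proof -
        have "g n y \<noteq> 0" using gp y by auto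
        then show ?thesis by (simp add: q_eq field_simps)
      qed
      ultimately show ?thesis by simp
    qed
    have "r n y > 0" if y: "y \<in> space MY" for y
      unfolding r_def using L1 y int[OF y] h(2) cp by (auto intro!: integral_pos_prob)
    then show ?thesis using rm int by auto
  qed
  have G: "g n \<in> borel_measurable MY \<and> (\<forall>y\<in>space MY. g n y > 0)" for n
  proof (induction n)
    case 0 then show ?case using g0 unfolding g_def by simp
  next
    case (Suc n)
    then have "r n \<in> borel_measurable MY" "\<forall>y\<in>space MY. r n y > 0"
      using rfacts by blast+
    then show ?case using Suc unfolding gsuc by auto
  qed
  have gm: "g n \<in> borel_measurable MY" and gp: "y \<in> space MY \<Longrightarrow> g n y > 0" for n y
    using G by auto
  have cm: "c n \<in> borel_measurable MX" and cp: "x \<in> space MX \<Longrightarrow> c n x > 0" for n x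
    using cfacts[OF gm] gp by auto
  have rm: "r n \<in> borel_measurable MY" and rp: "y \<in> space MY \<Longrightarrow> r n y > 0"
    and rint: "y \<in> space MY \<Longrightarrow> integrable (L y) (\<lambda>x. h x / c n x)" for n y
    using rfacts[OF gm] gp by auto

  have part1: "\<forall>n. \<forall>x\<in>space MX.
            (\<forall>y\<in>space MY. itq K L h g0 n x y > 0) \<and>
            itq K L h g0 n x \<in> borel_measurable MY \<and>
            integrable (K x) (itq K L h g0 n x) \<and>
            (\<integral>y. itq K L h g0 n x y \<partial>K x) = 1"
  proof (intro allI ballI conjI)
    fix n x assume x: "x \<in> space MX"
    show "itq K L h g0 n x y > 0" if "y \<in> space MY" for y
      using that x gp cp by (simp add: q_eq)
    show "itq K L h g0 n x \<in> borel_measurable MY"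
      unfolding q_eq using gm by measurable
    show "integrable (K x) (itq K L h g0 n x)"
      unfolding q_eq using fq[OF x] by (rule integrable_divide_zero)
    show "(\<integral>y. itq K L h g0 n x y \<partial>K x) = 1"
    proof -
      have "(\<integral>y. g n y / c n x \<partial>K x) = c n x / c n x" unfolding c_def by simp
      moreover have "c n x \<noteq> 0" using cp x by (metis less_irrefl)
      ultimately show ?thesis unfolding q_eq by simp
    qed
  qed

  have Kint: "(\<integral>y. a * g n y \<partial>K x) = a * c n x" for a n x
    unfolding c_def by (rule integral_mult_right_zero)
  have gY: "integrable PY (g n) \<and> (\<integral>y. g n y \<partial>PY) = 1" for n
  proof (cases n)
    case 0 then show ?thesis using g0 unfolding g_def PY_def by simp
  next
    case (Suc m)
    define F where "F z = ennreal (h (fst z) / c m (fst z) * g m (snd z))" for z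
    have Fm: "F \<in> borel_measurable (MX \<Otimes>\<^sub>M MY)"
      unfolding F_def using h(1) cm gm by measurable
    have "(\<integral>\<^sup>+y. ennreal (g n y) \<partial>PY) = (\<integral>\<^sup>+y. \<integral>\<^sup>+x. F (x,y) \<partial>L y \<partial>PY)"
    proof (rule nn_integral_cong)
      fix y assume "y \<in> space PY"
      then have y: "y \<in> space MY" by simp
      have e: "g n y = (\<integral>x. g m y / c m x * h x \<partial>L y)" unfolding Suc g_def c_def by simp
      have "integrable (L y) (\<lambda>x. g m y / c m x * h x)"
        using fin_g y unfolding q_eq by blast
      moreover have "(\<lambda>x. g m y / c m x * h x) = (\<lambda>x. h x / c m x * g m y)" by (auto simp: fun_eq_iff)
      ultimately have int: "integrable (L y) (\<lambda>x. h x / c m x * g m y)" by simp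
      have "ennreal (g n y) = ennreal (\<integral>x. h x / c m x * g m y \<partial>L y)"
        unfolding e by (simp add: mult.commute mult.left_commute)
      also have "\<dots> = (\<integral>\<^sup>+x. ennreal (h x / c m x * g m y) \<partial>L y)"
        by (rule nn_integral_eq_integral[symmetric, OF int])
           (use y h(2) cp gp in \<open>auto intro!: AE_I2 less_imp_le\<close>)
      finally show "ennreal (g n y) = (\<integral>\<^sup>+x. F (x,y) \<partial>L y)" unfolding F_def by simp
    qed
    also have "\<dots> = (\<integral>\<^sup>+z. F z \<partial>P)"
      unfolding PY_def by (rule disint_nn_Y[OF P L Fm, symmetric])
    also have "\<dots> = (\<integral>\<^sup>+x. \<integral>\<^sup>+y. F (x,y) \<partial>K x \<partial>PX)"
      unfolding PX_def by (rule disint_nn[OF P K Fm])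
    also have "\<dots> = (\<integral>\<^sup>+x. ennreal (h x) \<partial>PX)"
    proof (rule nn_integral_cong)
      fix x assume "x \<in> space PX"
      then have x: "x \<in> space MX" by simp
      have int: "integrable (K x) (\<lambda>y. h x / c m x * g m y)"
        by (rule integrable_mult_right[OF fq[OF x]])
      have "(\<integral>\<^sup>+y. F (x,y) \<partial>K x) = ennreal (\<integral>y. h x / c m x * g m y \<partial>K x)"
        unfolding F_def fst_conv snd_conv
        by (rule nn_integral_eq_integral[OF int])
           (use x h(2) cp gp in \<open>auto intro!: AE_I2 less_imp_le\<close>)
      also have "\<dots> = ennreal (h x)"
      proof -
        have "c m x \<noteq> 0" using cp x by (metis less_irrefl)
        then show ?thesis unfolding Kint by simp
      qed
      finally show "(\<integral>\<^sup>+y. F (x,y) \<partial>K x) = ennreal (h x)" .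
    qed
    also have "\<dots> = ennreal 1"
      using h unfolding PX_def
      by (subst nn_integral_eq_integral) (auto intro!: AE_I2 less_imp_le simp: marg_X_def)
    finally have nn: "(\<integral>\<^sup>+y. ennreal (g n y) \<partial>PY) = 1" by simp
    have int: "integrable PY (g n)"
      by (rule integrableI_nonneg) (use gm gp nn in \<open>auto intro!: AE_I2 less_imp_le\<close>)
    have "(\<integral>y. g n y \<partial>PY) = enn2real (\<integral>\<^sup>+y. ennreal (g n y) \<partial>PY)"
      by (rule integral_eq_nn_integral) (use gm gp in \<open>auto intro!: AE_I2 less_imp_le\<close>)
    then show ?thesis using int nn by simp
  qed
  have part2: "\<forall>n\<ge>1.
            (\<forall>y\<in>space MY. itg K L h g0 n y > 0) \<and>
            itg K L h g0 n \<in> borel_measurable MY \<and>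
            integrable (marg_Y P MY) (itg K L h g0 n) \<and>
            (\<integral>y. itg K L h g0 n y \<partial>marg_Y P MY) = 1"
    using gp gm gY unfolding g_def PY_def by blast

  have RN: "AE x in PX. ith P MX (g n) x = c n x" for n
  proof -
    have fstQ: "fst \<in> measurable (itQ P (g n)) MX" unfolding itQ_def using fstm by simp
    have spQ: "space (itQ P (g n)) = space P" unfolding itQ_def by simp
    have dens: "distr (itQ P (g n)) MX fst = density PX (\<lambda>x. ennreal (c n x))"
    proof (rule measure_eqI)
      show "sets (distr (itQ P (g n)) MX fst) = sets (density PX (\<lambda>x. ennreal (c n x)))" by simp
      fix A assume "A \<in> sets (distr (itQ P (g n)) MX fst)"
      then have A: "A \<in> sets MX" by simp
      have Am: "fst -` A \<inter> space P \<in> sets P" using measurable_sets[OF fstm A] .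
      have Fm: "(\<lambda>z. ennreal (g n (snd z) * indicator A (fst z))) \<in> borel_measurable (MX \<Otimes>\<^sub>M MY)"
        using gm A by measurable
      have "emeasure (distr (itQ P (g n)) MX fst) A = emeasure (itQ P (g n)) (fst -` A \<inter> space P)"
        by (subst emeasure_distr[OF fstQ A]) (simp add: spQ)
      also have "\<dots> = (\<integral>\<^sup>+z. ennreal (g n (snd z)) * indicator (fst -` A \<inter> space P) z \<partial>P)"
        unfolding itQ_def by (rule emeasure_density[OF _ Am]) (use gm sndm in measurable)
      also have "\<dots> = (\<integral>\<^sup>+z. ennreal (g n (snd z) * indicator A (fst z)) \<partial>P)"
        by (rule nn_integral_cong) (auto simp: indicator_def)
      also have "\<dots> = (\<integral>\<^sup>+x. \<integral>\<^sup>+y. ennreal (g n y * indicator A x) \<partial>K x \<partial>PX)"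
        unfolding PX_def using disint_nn[OF P K Fm] by simp
      also have "\<dots> = (\<integral>\<^sup>+x. ennreal (c n x) * indicator A x \<partial>PX)"
      proof (rule nn_integral_cong)
        fix x assume "x \<in> space PX"
        then have x: "x \<in> space MX" by simp
        have int: "integrable (K x) (\<lambda>y. g n y * indicator A x)"
          by (rule integrable_mult_left[OF fq[OF x]])
        have "(\<integral>\<^sup>+y. ennreal (g n y * indicator A x) \<partial>K x) = ennreal (\<integral>y. g n y * indicator A x \<partial>K x)"
          by (rule nn_integral_eq_integral[OF int])
             (use x gp in \<open>auto intro!: AE_I2 less_imp_le simp: indicator_def\<close>)
        also have "\<dots> = ennreal (c n x * indicator A x)"
          unfolding c_def by (simp add: integral_mult_left_zero)
        finally show "(\<integral>\<^sup>+y. ennreal (g n y * indicator A x) \<partial>K x) = ennreal (c n x) * indicator A x"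
          by (simp add: indicator_def)
      qed
      also have "\<dots> = emeasure (density PX (\<lambda>x. ennreal (c n x))) A"
        by (rule emeasure_density[symmetric]) (use cm A in auto)
      finally show "emeasure (distr (itQ P (g n)) MX fst) A = emeasure (density PX (\<lambda>x. ennreal (c n x))) A" .
    qed
    have "AE x in PX. ennreal (c n x) = RN_deriv PX (distr (itQ P (g n)) MX fst) x"
      by (rule PX.RN_deriv_unique[OF _ dens[symmetric]]) (use cm in simp)
    then show ?thesis
    proof (rule AE_mp[OF _ AE_I2[OF impI]])
      fix x assume "x \<in> space PX" and e: "ennreal (c n x) = RN_deriv PX (distr (itQ P (g n)) MX fst) x"
      then have x: "x \<in> space MX" by simp
      show "ith P MX (g n) x = c n x"
        unfolding ith_def PX_def[symmetric] e[symmetric] using cp[OF x] by simp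
    qed
  qed
  have ithm: "ith P MX (g k) \<in> borel_measurable MX" for k
  proof -
    have "(\<lambda>x. enn2real (RN_deriv PX (distr (itQ P (g k)) MX fst) x)) \<in> borel_measurable PX"
      by measurable
    then show ?thesis unfolding ith_def PX_def[symmetric] by simp
  qed
  have hlnc_m: "(\<lambda>x. h x * ln (c k x)) \<in> borel_measurable MX" for k
    using h(1) cm by measurable
  show ?thesis
  proof (intro conjI part1 part2 impI allI)
    fix n
    assume hyp: "integrable (marg_X P MX) (\<lambda>x. h x * \<bar>ln (h x)\<bar>) \<and>
           (\<forall>n. integrable (marg_X P MX) (\<lambda>x. h x * \<bar>ln (ith P MX (itg K L h g0 n) x)\<bar>))"
    have hlc: "integrable PX (\<lambda>x. h x * ln (c k x))" for k
    proof -
      have i1: "integrable PX (\<lambda>x. h x * \<bar>ln (ith P MX (g k) x)\<bar>)"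
        using hyp unfolding PX_def g_def by blast
      have "integrable PX (\<lambda>x. \<bar>h x * ln (c k x)\<bar>)"
      proof (rule integrable_cong_AE[THEN iffD1, OF _ _ _ i1])
        show "(\<lambda>x. h x * \<bar>ln (ith P MX (g k) x)\<bar>) \<in> borel_measurable PX"
          using h(1) ithm by simp
        show "(\<lambda>x. \<bar>h x * ln (c k x)\<bar>) \<in> borel_measurable PX"
          using hlnc_m by simp
        show "AE x in PX. h x * \<bar>ln (ith P MX (g k) x)\<bar> = \<bar>h x * ln (c k x)\<bar>"
          using RN[of k] AE_space
        proof eventually_elim
          case (elim x)
          then have "h x > 0" using h(2) by auto
          then show ?case using elim by (simp add: abs_mult)
        qed
      qed
      then show ?thesis using integrable_abs_iff[of "\<lambda>x. h x * ln (c k x)" PX] hlnc_m by simp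
    qed
    have hlh: "integrable PX (\<lambda>x. h x * ln (h x))"
    proof -
      have i1: "integrable PX (\<lambda>x. h x * \<bar>ln (h x)\<bar>)" using hyp unfolding PX_def by blast
      have "integrable PX (\<lambda>x. \<bar>h x * ln (h x)\<bar>)"
      proof (rule integrable_cong_AE[THEN iffD1, OF _ _ _ i1])
        show "(\<lambda>x. h x * \<bar>ln (h x)\<bar>) \<in> borel_measurable PX" using h(1) by simp
        show "(\<lambda>x. \<bar>h x * ln (h x)\<bar>) \<in> borel_measurable PX" using h(1) by simp
        show "AE x in PX. h x * \<bar>ln (h x)\<bar> = \<bar>h x * ln (h x)\<bar>"
        proof (rule AE_I2)
          fix x assume "x \<in> space PX"
          then have "h x > 0" using h(2) by auto
          then show "h x * \<bar>ln (h x)\<bar> = \<bar>h x * ln (h x)\<bar>" by (simp add: abs_mult)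
        qed
      qed
      moreover have "(\<lambda>x. h x * ln (h x)) \<in> borel_measurable PX" using h(1) by simp
      ultimately show ?thesis using integrable_abs_iff by blast
    qed
    have KLeq: "KL_dens PX h (ith P MX (g k)) = (\<integral>x. h x * ln (h x) \<partial>PX) - (\<integral>x. h x * ln (c k x) \<partial>PX)" for k
    proof -
      have "KL_dens PX h (ith P MX (g k)) = (\<integral>x. h x * ln (h x) - h x * ln (c k x) \<partial>PX)"
        unfolding KL_dens_def
      proof (rule integral_cong_AE)
        show "(\<lambda>x. h x * ln (h x / ith P MX (g k) x)) \<in> borel_measurable PX"
          using h(1) ithm by simp
        show "(\<lambda>x. h x * ln (h x) - h x * ln (c k x)) \<in> borel_measurable PX"
          using h(1) hlnc_m by simp
        show "AE x in PX. h x * ln (h x / ith P MX (g k) x) = h x * ln (h x) - h x * ln (c k x)"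
          using RN[of k] AE_space
        proof eventually_elim
          case (elim x)
          then have "h x > 0" "c k x > 0" using h(2) cp by auto
          then show ?case using elim by (simp add: ln_div algebra_simps)
        qed
      qed
      also have "\<dots> = (\<integral>x. h x * ln (h x) \<partial>PX) - (\<integral>x. h x * ln (c k x) \<partial>PX)"
        by (rule Bochner_Integration.integral_diff[OF hlh hlc])
      finally show ?thesis .
    qed
    have main: "(\<integral>x. h x * ln (c n x) \<partial>PX) \<le> (\<integral>x. h x * ln (c (Suc n) x) \<partial>PX)"
    proof -
      define \<Phi> where "\<Phi> x y = h x / c n x * (g n y / r n y)" for x y
      define S where "S x = (\<integral>\<^sup>+y. ennreal (\<Phi> x y) \<partial>K x)" for x
      define s where "s x = enn2real (S x)" for x
      have \<Phi>m: "(\<lambda>(x, y). ennreal (\<Phi> x y)) \<in> borel_measurable (MX \<Otimes>\<^sub>M MY)"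
        unfolding \<Phi>_def using h(1) cm gm rm by measurable
      have \<Phi>m': "(\<lambda>z. ennreal (\<Phi> (fst z) (snd z))) \<in> borel_measurable (MX \<Otimes>\<^sub>M MY)"
        unfolding \<Phi>_def using h(1) cm gm rm by measurable
      have Sm: "S \<in> borel_measurable MX"
        unfolding S_def by (rule nn_integral_measurable_subprob_algebra2[OF \<Phi>m Km])
      have "(\<integral>\<^sup>+x. S x \<partial>PX) = (\<integral>\<^sup>+z. ennreal (\<Phi> (fst z) (snd z)) \<partial>P)"
        unfolding S_def PX_def using disint_nn[OF P K \<Phi>m'] by simp
      also have "\<dots> = (\<integral>\<^sup>+y. \<integral>\<^sup>+x. ennreal (\<Phi> x y) \<partial>L y \<partial>PY)"
        unfolding PY_def using disint_nn_Y[OF P L \<Phi>m'] by simp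
      also have "\<dots> = (\<integral>\<^sup>+y. ennreal (g n y) \<partial>PY)"
      proof (rule nn_integral_cong)
        fix y assume "y \<in> space PY"
        then have y: "y \<in> space MY" by simp
        have int: "integrable (L y) (\<lambda>x. h x / c n x * (g n y / r n y))"
          by (rule integrable_mult_left[OF rint[OF y]])
        have "(\<integral>\<^sup>+x. ennreal (\<Phi> x y) \<partial>L y) = ennreal (\<integral>x. h x / c n x * (g n y / r n y) \<partial>L y)"
          unfolding \<Phi>_def
          by (rule nn_integral_eq_integral[OF int])
             (use y h(2) cp gp rp in \<open>auto intro!: AE_I2 less_imp_le\<close>)
        also have "(\<integral>x. h x / c n x * (g n y / r n y) \<partial>L y) = r n y * (g n y / r n y)"
          unfolding r_def by (rule integral_mult_left_zero)
        also have "\<dots> = g n y" using rp[OF y] by (metis less_irrefl nonzero_mult_div_cancel_left times_divide_eq_right)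
        finally show "(\<integral>\<^sup>+x. ennreal (\<Phi> x y) \<partial>L y) = ennreal (g n y)" .
      qed
      also have "\<dots> = ennreal (\<integral>y. g n y \<partial>PY)"
        by (rule nn_integral_eq_integral) (use gY gp in \<open>auto intro!: AE_I2 less_imp_le\<close>)
      also have "\<dots> = 1" using gY by simp
      finally have S1: "(\<integral>\<^sup>+x. S x \<partial>PX) = 1" .
      have Sfin: "AE x in PX. S x \<noteq> \<infinity>"
        by (rule nn_integral_PInf_AE) (use Sm S1 in simp_all)
      have sm: "s \<in> borel_measurable MX" unfolding s_def using Sm by measurable
      have ns: "(\<integral>\<^sup>+x. ennreal (s x) \<partial>PX) = 1"
      proof -
        have "(\<integral>\<^sup>+x. ennreal (s x) \<partial>PX) = (\<integral>\<^sup>+x. S x \<partial>PX)"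
          by (rule nn_integral_cong_AE) (use Sfin in \<open>auto simp: s_def less_top\<close>)
        then show ?thesis using S1 by simp
      qed
      have sint: "integrable PX s"
        by (rule integrableI_nonneg) (use sm ns in \<open>auto simp: s_def\<close>)
      have s1: "(\<integral>x. s x \<partial>PX) = 1"
      proof -
        have "AE x in PX. 0 \<le> s x" by (simp add: s_def)
        then show ?thesis using integral_eq_nn_integral[of s PX] sm ns by simp
      qed
      have pw: "AE x in PX. h x - s x \<le> h x * ln (c (Suc n) x) - h x * ln (c n x)"
        using Sfin AE_space
      proof eventually_elim
        case (elim x)
        then have x: "x \<in> space MX" and Sx: "S x \<noteq> \<infinity>" by auto
        interpret Kx: prob_space "K x" using K1 x by auto
        define A where "A = c (Suc n) x / c n x"
        have cnx: "c n x > 0" and csx: "c (Suc n) x > 0" and hx: "h x > 0"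
          using cp x h(2) by auto
        have Ap: "A > 0" unfolding A_def using cnx csx by simp
        have \<Phi>nn: "0 \<le> \<Phi> x y" if y: "y \<in> space MY" for y
        proof -
          have "g n y > 0" "r n y > 0" using gp[OF y] rp[OF y] by auto
          then show ?thesis unfolding \<Phi>_def using hx cnx by simp
        qed
        have \<Phi>mx: "\<Phi> x \<in> borel_measurable MY" unfolding \<Phi>_def using gm rm by measurable
        have \<Phi>int: "integrable (K x) (\<Phi> x)"
        proof (rule integrableI_nonneg)
          show "\<Phi> x \<in> borel_measurable (K x)" using \<Phi>mx x by simp
          show "AE y in K x. 0 \<le> \<Phi> x y"
            using x \<Phi>nn by (auto intro!: AE_I2)
          show "(\<integral>\<^sup>+y. ennreal (\<Phi> x y) \<partial>K x) < \<infinity>" using Sx by (simp add: S_def less_top)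
        qed
        have sx: "s x = (\<integral>y. \<Phi> x y \<partial>K x)"
          unfolding s_def S_def
          by (rule integral_eq_nn_integral[symmetric]) (use \<Phi>mx x \<Phi>nn in \<open>auto intro!: AE_I2\<close>)
        have i1: "integrable (K x) (\<lambda>y. 2 * h x / c n x * g n y)"
          by (rule integrable_mult_right[OF fq[OF x]])
        have i3: "integrable (K x) (\<lambda>y. h x / (c n x * A) * g (Suc n) y)"
          by (rule integrable_mult_right[OF fq[OF x]])
        have i4: "integrable (K x) (\<lambda>y. h x * ln A / c n x * g n y)"
          by (rule integrable_mult_right[OF fq[OF x]])
        have "(\<integral>y. 2 * h x / c n x * g n y - \<Phi> x y - h x / (c n x * A) * g (Suc n) y \<partial>K x)
              \<le> (\<integral>y. h x * ln A / c n x * g n y \<partial>K x)"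
        proof (rule integral_mono)
          show "integrable (K x) (\<lambda>y. 2 * h x / c n x * g n y - \<Phi> x y - h x / (c n x * A) * g (Suc n) y)"
            using i1 \<Phi>int i3 by auto
          show "integrable (K x) (\<lambda>y. h x * ln A / c n x * g n y)" by (rule i4)
          fix y assume "y \<in> space (K x)"
          then have y: "y \<in> space MY" using x by simp
          have gy: "g n y > 0" and ry: "r n y > 0" using gp rp y by auto
          have w: "0 \<le> h x * g n y / c n x" using hx gy cnx by simp
          have ki: "2 * (h x * g n y / c n x) - (h x * g n y / c n x) / r n y
                     - (h x * g n y / c n x) * r n y / A \<le> (h x * g n y / c n x) * ln A"
            by (rule key_ineq[OF Ap ry w])
          have e1: "2 * h x / c n x * g n y = 2 * (h x * g n y / c n x)" by simp
          have e2: "\<Phi> x y = (h x * g n y / c n x) / r n y" unfolding \<Phi>_def by simp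
          have e3: "h x / (c n x * A) * g (Suc n) y = (h x * g n y / c n x) * r n y / A"
            unfolding gsuc by simp
          have e4: "h x * ln A / c n x * g n y = (h x * g n y / c n x) * ln A" by simp
          show "2 * h x / c n x * g n y - \<Phi> x y - h x / (c n x * A) * g (Suc n) y \<le> h x * ln A / c n x * g n y"
            unfolding e1 e2 e3 e4 by (rule ki)
        qed
        moreover have "(\<integral>y. 2 * h x / c n x * g n y - \<Phi> x y - h x / (c n x * A) * g (Suc n) y \<partial>K x)
              = 2 * h x / c n x * c n x - s x - h x / (c n x * A) * c (Suc n) x"
          using i1 \<Phi>int i3 unfolding sx Kint[symmetric] by simp
        moreover have "(\<integral>y. h x * ln A / c n x * g n y \<partial>K x) = h x * ln A / c n x * c n x"
          by (rule Kint)
        ultimately have "2 * h x / c n x * c n x - s x - h x / (c n x * A) * c (Suc n) x \<le> h x * ln A / c n x * c n x"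
          by simp
        moreover have "2 * h x / c n x * c n x = 2 * h x" using cnx by simp
        moreover have "h x / (c n x * A) * c (Suc n) x = h x" unfolding A_def using cnx csx by simp
        moreover have "h x * ln A / c n x * c n x = h x * ln (c (Suc n) x) - h x * ln (c n x)"
        proof -
          have e: "ln A = ln (c (Suc n) x) - ln (c n x)" unfolding A_def using cnx csx by (simp add: ln_div)
          have "c n x \<noteq> 0" using cnx by simp
          then show ?thesis by (simp add: e right_diff_distrib)
        qed
        ultimately show ?case by simp
      qed
      have "(\<integral>x. h x - s x \<partial>PX) \<le> (\<integral>x. h x * ln (c (Suc n) x) - h x * ln (c n x) \<partial>PX)"
        by (rule integral_mono_AE[OF _ _ pw]) (use h(3) sint hlc in \<open>auto simp: PX_def\<close>)
      moreover have "(\<integral>x. h x - s x \<partial>PX) = 0"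
        using h(3,4) sint s1 unfolding PX_def by simp
      moreover have "(\<integral>x. h x * ln (c (Suc n) x) - h x * ln (c n x) \<partial>PX)
          = (\<integral>x. h x * ln (c (Suc n) x) \<partial>PX) - (\<integral>x. h x * ln (c n x) \<partial>PX)"
        by (rule Bochner_Integration.integral_diff[OF hlc hlc])
      ultimately show ?thesis by simp
    qed
    show "KL_dens (marg_X P MX) h (ith P MX (itg K L h g0 (Suc n)))
                    \<le> KL_dens (marg_X P MX) h (ith P MX (itg K L h g0 n))"
      using KLeq[of n] KLeq[of "Suc n"] main unfolding PX_def g_def by simp
  qed
qed

end
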